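(* Let $A$, $B$, $I$ be finite non-empty sets, $\{V_i\}_{i\in I}\subseteq\mathcal R(A)$, $\{W_i\}_{i\in I}\subseteq\mathcal R(B)$, $Z\in\mathcal R(A,B)$, let $t\in\{1,\dots,6\}$, $\phi=\phi^{(t)}$, and define $R_1=Z$, $R_{k+1}=R_k\wedge\phi(R_k)$ for $k\in\mathbb N$. Suppose the subalgebra of $\mathcal L$ generated by $\mathrm{im}(Z)\cup\bigcup_{i\in I}(\mathrm{im}(V_i)\cup\mathrm{im}(W_i))$ is finite. Then: (a) the sequence $\{R_k\}_{k\in\mathbb N}$ is descending and the set $\{R_k:k\in\mathbb N\}$ is finite, and there is a least natural number $k$ such that $R_k=R_{k+1}$; (b) for this $k$, $R_k$ is the greatest solution to the system $WL^{2\text{-}t}(A,B,I,V_i,W_i,Z)$.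
   Context: $\mathcal L=(L,\wedge,\vee,\otimes,\to,0,1)$ is a complete residuated lattice; $\mathrm{im}$ denotes the set of values of a fuzzy relation, and subalgebras are with respect to $(L,\wedge,\vee,\otimes,\to,0,1)$. For non-empty sets $X,Y$, $\mathcal R(X,Y)$ is the set of fuzzy relations $X\times Y\to L$, $\mathcal R(X)=\mathcal R(X,X)$, ordered pointwise with pointwise meets; $R^{-1}(y,x)=R(x,y)$; $(R\circ S)(x,t)=\bigvee_{y}R(x,y)\otimes S(y,t)$. Residuals: for $S\in\mathcal R(X,Y)$, $T\in\mathcal R(X)$, $T'\in\mathcal R(Y)$: $(S/T)(x,y)=\bigwedge_{x'\in X}(T(x',x)\to S(x',y))$, $(S\backslash T')(x,y)=\bigwedge_{y'\in Y}(T'(y,y')\to S(x,y'))$. The maps $\phi^{(t)}:\mathcal R(A,B)\to\mathcal R(A,B)$ are: $\phi^{(1)}(R)=\bigwedge_{i}[(W_i\circ R^{-1})\backslash V_i]^{-1}$; $\phi^{(2)}(R)=\bigwedge_{i}(R\circ W_i)/V_i$; $\phi^{(3)}(R)=\bigwedge_{i}[(W_i\circ R^{-1})\backslash V_i]^{-1}\wedge[(V_i\circ R)\backslash W_i]$; $\phi^{(4)}(R)=\bigwedge_{i}[(R\circ W_i)/V_i]\wedge[(R^{-1}\circ V_i)/W_i]^{-1}$; $\phi^{(5)}(R)=\bigwedge_{i}[(R\circ W_i)/V_i]\wedge[(V_i\circ R)\backslash W_i]$; $\phi^{(6)}(R)=\bigwedge_{i}[(W_i\circ R^{-1})\backslash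 V_i]^{-1}\wedge[(R^{-1}\circ V_i)/W_i]^{-1}$. Heterogeneous systems with unknown $U\in\mathcal R(A,B)$: $WL^{2\text{-}1}$: $U^{-1}\circ V_i\le W_i\circ U^{-1}$ ($i\in I$), $U\le Z$; $WL^{2\text{-}2}$: $V_i\circ U\le U\circ W_i$ ($i\in I$), $U\le Z$; $WL^{2\text{-}3}$: $U^{-1}\circ V_i\le W_i\circ U^{-1}$ and $U\circ W_i\le V_i\circ U$ ($i\in I$), $U\le Z$; $WL^{2\text{-}4}$: $V_i\circ U\le U\circ W_i$ and $W_i\circ U^{-1}\le U^{-1}\circ V_i$ ($i\in I$), $U\le Z$; $WL^{2\text{-}5}$: $V_i\circ U=U\circ W_i$ ($i\in I$), $U\le Z$; $WL^{2\text{-}6}$: $U^{-1}\circ V_i=W_i\circ U^{-1}$ ($i\in I$), $U\le Z$. *)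

theory Defs
  imports Main
begin

class complete_residuated_lattice = complete_lattice + comm_monoid_mult +
  fixes resid :: "'a \<Rightarrow> 'a \<Rightarrow> 'a"
  assumes one_is_top: "(1::'a) = top"
  assumes residuation: "x * y \<le> z \<longleftrightarrow> x \<le> resid y z"

inductive_set subalg_gen :: "'l::complete_residuated_lattice set \<Rightarrow> 'l set"
  for S :: "'l set" where
  base: "x \<in> S \<Longrightarrow> x \<in> subalg_gen S"
| bot: "bot \<in> subalg_gen S"
| top: "top \<in> subalg_gen S"
| inf: "x \<in> subalg_gen S \<Longrightarrow> y \<in> subalg_gen S \<Longrightarrow> inf x y \<in> subalg_gen S"
| sup: "x \<in> subalg_gen S \<Longrightarrow> y \<in> subalg_gen S \<Longrightarrow> sup x y \<in> subalg_gen S"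
| times: "x \<in> subalg_gen S \<Longrightarrow> y \<in> subalg_gen S \<Longrightarrow> x * y \<in> subalg_gen S"
| resid: "x \<in> subalg_gen S \<Longrightarrow> y \<in> subalg_gen S \<Longrightarrow> resid x y \<in> subalg_gen S"

text \<open>A fuzzy relation between X and Y is a function X => Y => L; the pointwise
  order and pointwise meets are Isabelle's order/inf on functions.\<close>

definition conv :: "('x \<Rightarrow> 'y \<Rightarrow> 'l) \<Rightarrow> 'y \<Rightarrow> 'x \<Rightarrow> 'l" where
  "conv R = (\<lambda>y x. R x y)"

definition rcomp :: "('x \<Rightarrow> 'y \<Rightarrow> 'l::complete_residuated_lattice) \<Rightarrow> ('y \<Rightarrow> 'z \<Rightarrow> 'l) \<Rightarrow> 'x \<Rightarrow> 'z \<Rightarrow> 'l" where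
  "rcomp R S = (\<lambda>x t. SUP y. R x y * S y t)"

definition rres :: "('x \<Rightarrow> 'y \<Rightarrow> 'l::complete_residuated_lattice) \<Rightarrow> ('x \<Rightarrow> 'x \<Rightarrow> 'l) \<Rightarrow> 'x \<Rightarrow> 'y \<Rightarrow> 'l" where
  "rres S T = (\<lambda>x y. INF x'. resid (T x' x) (S x' y))"

definition lres :: "('x \<Rightarrow> 'y \<Rightarrow> 'l::complete_residuated_lattice) \<Rightarrow> ('y \<Rightarrow> 'y \<Rightarrow> 'l) \<Rightarrow> 'x \<Rightarrow> 'y \<Rightarrow> 'l" where
  "lres S T' = (\<lambda>x y. INF y'. resid (T' y y') (S x y'))"

definition phi :: "nat \<Rightarrow> ('i \<Rightarrow> 'a \<Rightarrow> 'a \<Rightarrow> 'l::complete_residuated_lattice) \<Rightarrow> ('i \<Rightarrow> 'b \<Rightarrow> 'b \<Rightarrow> 'l)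
    \<Rightarrow> ('a \<Rightarrow> 'b \<Rightarrow> 'l) \<Rightarrow> 'a \<Rightarrow> 'b \<Rightarrow> 'l" where
  "phi t V W R =
    (if t = 1 then (INF i. conv (lres (rcomp (W i) (conv R)) (V i)))
     else if t = 2 then (INF i. rres (rcomp R (W i)) (V i))
     else if t = 3 then (INF i. inf (conv (lres (rcomp (W i) (conv R)) (V i)))
                                    (lres (rcomp (V i) R) (W i)))
     else if t = 4 then (INF i. inf (rres (rcomp R (W i)) (V i))
                                    (conv (rres (rcomp (conv R) (V i)) (W i))))
     else if t = 5 then (INF i. inf (rres (rcomp R (W i)) (V i))
                                    (lres (rcomp (V i) R) (W i)))
     else (INF i. inf (conv (lres (rcomp (W i) (conv R)) (V i)))
                      (conv (rres (rcomp (conv R) (V i)) (W i)))))"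

text \<open>The sequence R_1 = Z, R_(k+1) = R_k meet phi(R_k), indexed by k >= 1.\<close>
definition Rseq :: "nat \<Rightarrow> ('i \<Rightarrow> 'a \<Rightarrow> 'a \<Rightarrow> 'l::complete_residuated_lattice) \<Rightarrow> ('i \<Rightarrow> 'b \<Rightarrow> 'b \<Rightarrow> 'l)
    \<Rightarrow> ('a \<Rightarrow> 'b \<Rightarrow> 'l) \<Rightarrow> nat \<Rightarrow> 'a \<Rightarrow> 'b \<Rightarrow> 'l" where
  "Rseq t V W Z k = ((\<lambda>R. inf R (phi t V W R)) ^^ (k - 1)) Z"

definition is_WL :: "nat \<Rightarrow> ('i \<Rightarrow> 'a \<Rightarrow> 'a \<Rightarrow> 'l::complete_residuated_lattice) \<Rightarrow> ('i \<Rightarrow> 'b \<Rightarrow> 'b \<Rightarrow> 'l)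
    \<Rightarrow> ('a \<Rightarrow> 'b \<Rightarrow> 'l) \<Rightarrow> ('a \<Rightarrow> 'b \<Rightarrow> 'l) \<Rightarrow> bool" where
  "is_WL t V W Z U \<longleftrightarrow> U \<le> Z \<and>
    (if t = 1 then (\<forall>i. rcomp (conv U) (V i) \<le> rcomp (W i) (conv U))
     else if t = 2 then (\<forall>i. rcomp (V i) U \<le> rcomp U (W i))
     else if t = 3 then (\<forall>i. rcomp (conv U) (V i) \<le> rcomp (W i) (conv U)
                            \<and> rcomp U (W i) \<le> rcomp (V i) U)
     else if t = 4 then (\<forall>i. rcomp (V i) U \<le> rcomp U (W i)
                            \<and> rcomp (W i) (conv U) \<le> rcomp (conv U) (V i))
     else if t = 5 then (\<forall>i. rcomp (V i) U = rcomp U (W i))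
     else (\<forall>i. rcomp (conv U) (V i) = rcomp (W i) (conv U)))"

definition greatest_WL where
  "greatest_WL t V W Z U \<longleftrightarrow> is_WL t V W Z U \<and> (\<forall>U'. is_WL t V W Z U' \<longrightarrow> U' \<le> U)"

end

theory Submission
  imports Defs "HOL-Library.FuncSet"
begin

lemma resid_le_iff: "(x::'l::complete_residuated_lattice) \<le> resid y z \<longleftrightarrow> x * y \<le> z"
  by (simp add: residuation)

lemma mult_mono_l: "(a::'l::complete_residuated_lattice) \<le> b \<Longrightarrow> a * c \<le> b * c"
proof -
  assume "a \<le> b"
  have "b \<le> resid c (b*c)" by (simp add: resid_le_iff)
  with \<open>a \<le> b\<close> have "a \<le> resid c (b*c)" by (rule order_trans)
  thus ?thesis by (simp add: resid_le_iff)
qed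

lemma mult_mono_r: "(a::'l::complete_residuated_lattice) \<le> b \<Longrightarrow> c * a \<le> c * b"
  using mult_mono_l[of a b c] by (simp add: mult.commute)

lemma resid_mono: "(z::'l::complete_residuated_lattice) \<le> z' \<Longrightarrow> resid y z \<le> resid y z'"
proof -
  assume "z \<le> z'"
  have "resid y z * y \<le> z" by (simp flip: resid_le_iff)
  with \<open>z \<le> z'\<close> have "resid y z * y \<le> z'" by (meson order_trans)
  thus ?thesis by (simp add: resid_le_iff)
qed

lemma lemA: "(Q \<le> rres S P) \<longleftrightarrow> (rcomp P Q \<le> S)"
  unfolding rcomp_def rres_def le_fun_def
  by (simp add: SUP_le_iff le_INF_iff resid_le_iff mult.commute; blast)

lemma lemB: "(Q \<le> lres S P) \<longleftrightarrow> (rcomp Q P \<le> S)"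
  unfolding rcomp_def lres_def le_fun_def
  by (simp add: SUP_le_iff le_INF_iff resid_le_iff mult.commute; blast)

lemma le_conv_iff: "U \<le> conv X \<longleftrightarrow> conv U \<le> X"
  unfolding conv_def le_fun_def by auto

lemma is_WL_iff: "is_WL t V W Z U \<longleftrightarrow> U \<le> Z \<and> U \<le> phi t V W U"
  unfolding is_WL_def phi_def
  by (auto simp add: le_INF_iff le_conv_iff lemA lemB intro: antisym)

lemma conv_mono: "R \<le> R' \<Longrightarrow> conv R \<le> conv R'"
  unfolding conv_def le_fun_def by auto

lemma rcomp_mono: "R \<le> R' \<Longrightarrow> S \<le> S' \<Longrightarrow> rcomp R S \<le> rcomp R' S'"
  unfolding rcomp_def le_fun_def
  by (auto intro!: SUP_mono' order_trans[OF mult_mono_l mult_mono_r])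

lemma lres_mono: "S \<le> S' \<Longrightarrow> lres S T \<le> lres S' T"
  unfolding lres_def le_fun_def
  by (auto intro!: INF_mono' resid_mono)

lemma rres_mono: "S \<le> S' \<Longrightarrow> rres S T \<le> rres S' T"
  unfolding rres_def le_fun_def
  by (auto intro!: INF_mono' resid_mono)

lemma phi_mono: "R \<le> R' \<Longrightarrow> phi t V W R \<le> phi t V W R'"
  unfolding phi_def
  by (auto intro!: INF_mono' inf_mono conv_mono lres_mono rres_mono rcomp_mono)

definition inG where "inG S R \<longleftrightarrow> (\<forall>x y. R x y \<in> subalg_gen S)"

lemma SUP_G: "finite A \<Longrightarrow> (\<forall>x\<in>A. f x \<in> subalg_gen S) \<Longrightarrow> (SUP x\<in>A. f x) \<in> subalg_gen S"
  by (induction A rule: finite_induct) (auto intro: subalg_gen.intros)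

lemma INF_G: "finite A \<Longrightarrow> (\<forall>x\<in>A. f x \<in> subalg_gen S) \<Longrightarrow> (INF x\<in>A. f x) \<in> subalg_gen S"
  by (induction A rule: finite_induct) (auto intro: subalg_gen.intros)

lemma conv_G: "inG S R \<Longrightarrow> inG S (conv R)"
  unfolding inG_def conv_def by auto

lemma inf_G: "inG S R \<Longrightarrow> inG S R' \<Longrightarrow> inG S (inf R R')"
  unfolding inG_def by (auto intro: subalg_gen.intros)

lemma rcomp_G: "inG S R \<Longrightarrow> inG S (Q::'y::finite \<Rightarrow> _ \<Rightarrow> _) \<Longrightarrow> inG S (rcomp R Q)"
  unfolding inG_def rcomp_def by (auto intro!: SUP_G intro: subalg_gen.intros)

lemma lres_G: "inG S R \<Longrightarrow> inG S (Q::'y::finite \<Rightarrow> _ \<Rightarrow> _) \<Longrightarrow> inG S (lres R Q)"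
  unfolding inG_def lres_def by (auto intro!: INF_G intro: subalg_gen.intros)

lemma rres_G: "inG S R \<Longrightarrow> inG S (Q::'y::finite \<Rightarrow> _ \<Rightarrow> _) \<Longrightarrow> inG S (rres R Q)"
  unfolding inG_def rres_def by (auto intro!: INF_G intro: subalg_gen.intros)

lemma INFi_G: "(\<And>i. inG S (F (i::'i::finite))) \<Longrightarrow> inG S (INF i. F i)"
  unfolding inG_def by (auto intro!: INF_G)

lemma phi_G:
  fixes V :: "'i::finite \<Rightarrow> 'a::finite \<Rightarrow> 'a \<Rightarrow> 'l::complete_residuated_lattice"
    and W :: "'i \<Rightarrow> 'b::finite \<Rightarrow> 'b \<Rightarrow> 'l"
  shows "inG S R \<Longrightarrow> (\<And>i. inG S (V i)) \<Longrightarrow> (\<And>i. inG S (W i)) \<Longrightarrow> inG S (phi t V W R)"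
  unfolding phi_def
  by (auto intro!: INFi_G inf_G conv_G lres_G rres_G rcomp_G)

lemma finite_inG:
  assumes "finite (subalg_gen S)"
  shows "finite {R :: 'a::finite \<Rightarrow> 'b::finite \<Rightarrow> 'l::complete_residuated_lattice. inG S R}"
proof -
  let ?G = "subalg_gen S"
  have f1: "finite (Pi UNIV (\<lambda>_::'b. ?G))"
    using finite_PiE[of "UNIV::'b set" "\<lambda>_. ?G"] assms by (simp add: PiE_UNIV_domain)
  have f2: "finite (Pi UNIV (\<lambda>_::'a. Pi UNIV (\<lambda>_::'b. ?G)))"
    using finite_PiE[of "UNIV::'a set" "\<lambda>_. Pi UNIV (\<lambda>_::'b. ?G)"] f1 by (simp add: PiE_UNIV_domain)
  have "{R :: 'a \<Rightarrow> 'b \<Rightarrow> 'l. inG S R} \<subseteq> Pi UNIV (\<lambda>_::'a. Pi UNIV (\<lambda>_::'b. ?G))"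
    unfolding inG_def by auto
  thus ?thesis using f2 finite_subset by blast
qed

theorem theorem5p3:
  fixes V :: "'i::finite \<Rightarrow> 'a::finite \<Rightarrow> 'a \<Rightarrow> 'l::complete_residuated_lattice"
    and W :: "'i \<Rightarrow> 'b::finite \<Rightarrow> 'b \<Rightarrow> 'l"
    and Z :: "'a \<Rightarrow> 'b \<Rightarrow> 'l"
    and t :: nat
  assumes "t \<in> {1..6}"
    and "finite (subalg_gen (range (case_prod Z) \<union> (\<Union>i. range (case_prod (V i)) \<union> range (case_prod (W i)))))"
  shows "(\<forall>k\<ge>1. Rseq t V W Z (k + 1) \<le> Rseq t V W Z k)
       \<and> finite {Rseq t V W Z k | k. k \<ge> 1}
       \<and> (\<exists>k\<ge>1. Rseq t V W Z k = Rseq t V W Z (k + 1)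
              \<and> (\<forall>j. 1 \<le> j \<and> j < k \<longrightarrow> Rseq t V W Z j \<noteq> Rseq t V W Z (j + 1))
              \<and> greatest_WL t V W Z (Rseq t V W Z k))"
proof -
  define S where "S = range (case_prod Z) \<union> (\<Union>i. range (case_prod (V i)) \<union> range (case_prod (W i)))"
  define F where "F = (\<lambda>R. inf R (phi t V W R))"
  define r where "r n = (F ^^ n) Z" for n
  have Rs: "Rseq t V W Z k = r (k - 1)" for k unfolding Rseq_def r_def F_def by simp
  have rS: "r (Suc n) = F (r n)" for n unfolding r_def by simp
  have dec: "r (Suc n) \<le> r n" for n unfolding rS F_def by simp
  have decle: "m \<le> n \<Longrightarrow> r n \<le> r m" for m n by (rule lift_Suc_antimono_le[of r, OF dec])
  have GZ: "inG S Z" unfolding inG_def S_def by (auto intro: subalg_gen.base)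
  have GV: "inG S (V i)" for i unfolding inG_def
  proof (intro allI subalg_gen.base)
    fix x y have "V i x y = case_prod (V i) (x,y)" by simp
    hence "V i x y \<in> range (case_prod (V i))" by blast
    thus "V i x y \<in> S" unfolding S_def by blast
  qed
  have GW: "inG S (W i)" for i unfolding inG_def
  proof (intro allI subalg_gen.base)
    fix x y have "W i x y = case_prod (W i) (x,y)" by simp
    hence "W i x y \<in> range (case_prod (W i))" by blast
    thus "W i x y \<in> S" unfolding S_def by blast
  qed
  have Gr: "inG S (r n)" for n
  proof (induction n)
    case 0 then show ?case using GZ by (simp add: r_def)
  next
    case (Suc n) then show ?case unfolding rS F_def
      by (intro inf_G phi_G GV GW)
  qed
  have finr: "finite (range r)"
  proof -
    have "finite {R :: 'a \<Rightarrow> 'b \<Rightarrow> 'l. inG S R}"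
      by (rule finite_inG) (use assms(2) in \<open>simp add: S_def\<close>)
    moreover have "range r \<subseteq> {R :: 'a \<Rightarrow> 'b \<Rightarrow> 'l. inG S R}" using Gr by auto
    ultimately show ?thesis by (rule finite_subset[rotated])
  qed
  have set_eq: "{Rseq t V W Z k | k. k \<ge> 1} = range r"
  proof
    show "{Rseq t V W Z k | k. k \<ge> 1} \<subseteq> range r" by (auto simp: Rs)
    show "range r \<subseteq> {Rseq t V W Z k | k. k \<ge> 1}"
    proof
      fix R assume "R \<in> range r"
      then obtain n where "R = r n" by auto
      hence "R = Rseq t V W Z (n+1)" by (simp add: Rs)
      thus "R \<in> {Rseq t V W Z k | k. k \<ge> 1}" by auto
    qed
  qed
  have "\<not> inj r"
  proof
    assume "inj r"
    hence "finite (UNIV::nat set)" using finr finite_imageD by blast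
    thus False by simp
  qed
  then obtain m n where mn: "m \<noteq> n" "r m = r n" unfolding inj_def by blast
  have ex: "\<exists>p. r p = r (Suc p)"
  proof (cases "m < n")
    case True
    have "r n \<le> r (Suc m)" using True decle by simp
    moreover have "r (Suc m) \<le> r m" by (rule dec)
    ultimately have "r m = r (Suc m)" using mn(2) by (simp add: antisym)
    thus ?thesis by blast
  next
    case False
    hence "n < m" using mn by simp
    have "r m \<le> r (Suc n)" using \<open>n < m\<close> decle by simp
    moreover have "r (Suc n) \<le> r n" by (rule dec)
    ultimately have "r n = r (Suc n)" using mn(2) by (simp add: antisym)
    thus ?thesis by blast
  qed
  define p where "p = (LEAST p. r p = r (Suc p))"
  have pfix: "r p = r (Suc p)" unfolding p_def by (rule LeastI_ex[OF ex])
  have pmin: "q < p \<Longrightarrow> r q \<noteq> r (Suc q)" for q unfolding p_def using not_less_Least by blast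
  have great: "greatest_WL t V W Z (r p)"
    unfolding greatest_WL_def
  proof (intro conjI allI impI)
    have "r p \<le> Z" using decle[of 0 p] by (simp add: r_def)
    moreover have "r p \<le> phi t V W (r p)"
    proof -
      have eq: "r p = inf (r p) (phi t V W (r p))" using pfix unfolding rS F_def .
      show ?thesis by (rule order_trans[OF eq_refl[OF eq] inf_le2])
    qed
    ultimately show "is_WL t V W Z (r p)" by (simp add: is_WL_iff)
  next
    fix U assume "is_WL t V W Z U"
    hence U: "U \<le> Z" "U \<le> phi t V W U" by (simp_all add: is_WL_iff)
    have "U \<le> r n" for n
    proof (induction n)
      case 0 then show ?case using U by (simp add: r_def)
    next
      case (Suc n)
      have "U \<le> phi t V W (r n)" using U(2) phi_mono[OF Suc] by (rule order_trans)
      with Suc.IH show ?case unfolding rS F_def by (rule le_infI)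
    qed
    thus "U \<le> r p" .
  qed
  show ?thesis
  proof (intro conjI)
    show "\<forall>k\<ge>1. Rseq t V W Z (k + 1) \<le> Rseq t V W Z k"
    proof (intro allI impI)
      fix k :: nat assume "k \<ge> 1"
      hence "k + 1 - 1 = Suc (k - 1)" by simp
      thus "Rseq t V W Z (k + 1) \<le> Rseq t V W Z k" using dec by (simp only: Rs)
    qed
  next
    show "finite {Rseq t V W Z k | k. k \<ge> 1}" using set_eq finr by simp
  next
    show "\<exists>k\<ge>1. Rseq t V W Z k = Rseq t V W Z (k + 1)
              \<and> (\<forall>j. 1 \<le> j \<and> j < k \<longrightarrow> Rseq t V W Z j \<noteq> Rseq t V W Z (j + 1))
              \<and> greatest_WL t V W Z (Rseq t V W Z k)"
    proof (intro exI[of _ "p+1"] conjI allI impI)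
      show "Rseq t V W Z (p + 1) = Rseq t V W Z (p + 1 + 1)" using pfix by (simp add: Rs)
      show "greatest_WL t V W Z (Rseq t V W Z (p + 1))" using great by (simp add: Rs)
      fix j assume j: "1 \<le> j \<and> j < p + 1"
      hence "j - 1 < p" by linarith
      hence "r (j-1) \<noteq> r (Suc (j-1))" by (rule pmin)
      moreover have "Suc (j-1) = j + 1 - 1" using j by simp
      ultimately show "Rseq t V W Z j \<noteq> Rseq t V W Z (j + 1)" by (simp add: Rs)
    qed simp
  qed
qed

end
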